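(* Let $Z$ be a convex subset of a real vector space $V$ and let $y\in Z$. For all $x_1,x_2\in Z$ with $x_1\leq_C y$ and $x_2\leq_C y$, and all $0\leq s\leq 1$, $$\frac{1}{t_y\big(sx_1+(1-s)x_2\big)}\leq\frac{s}{t_y(x_1)}+\frac{1-s}{t_y(x_2)}.$$
   Context: For $x,y\in Z$ write $x\leq_C y$ if there exist $z\in Z$ and $0<t\leq 1$ with $y=tx+(1-t)z$. The weight function $t_y:Z\to[0,1]$ is defined by $t_y(x)=\sup\{0\leq t<1 : \frac{y-tx}{1-t}\in Z\}$. *)

theory Defs
  imports "HOL-Analysis.Analysis"
begin

definition leqC :: "'a::real_vector set \<Rightarrow> 'a \<Rightarrow> 'a \<Rightarrow> bool" where
  "leqC Z x y \<longleftrightarrow> (\<exists>z\<in>Z. \<exists>t::real. 0 < t \<and> t \<le> 1 \<and> y = t *\<^sub>R x + (1 - t) *\<^sub>R z)"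

definition tweight :: "'a::real_vector set \<Rightarrow> 'a \<Rightarrow> 'a \<Rightarrow> real" where
  "tweight Z y x = Sup {t::real. 0 \<le> t \<and> t < 1 \<and> (1 / (1 - t)) *\<^sub>R (y - t *\<^sub>R x) \<in> Z}"

end

theory Submission
  imports Defs
begin

definition SS :: "'a::real_vector set \<Rightarrow> 'a \<Rightarrow> 'a \<Rightarrow> real set" where
  "SS Z y x = {t::real. 0 \<le> t \<and> t < 1 \<and> (1 / (1 - t)) *\<^sub>R (y - t *\<^sub>R x) \<in> Z}"

lemma tw_SS: "tweight Z y x = Sup (SS Z y x)"
  by (simp add: tweight_def SS_def)

lemma SS_0: "y \<in> Z \<Longrightarrow> 0 \<in> SS Z y x"
  by (simp add: SS_def)

lemma SS_bdd: "bdd_above (SS Z y x)"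
  by (rule bdd_aboveI[of _ 1]) (auto simp: SS_def)

lemma SS_down:
  assumes "convex Z" "y \<in> Z" "t \<in> SS Z y x" "0 \<le> t'" "t' \<le> t"
  shows "t' \<in> SS Z y x"
proof (cases "t' = t")
  case True then show ?thesis using assms by simp
next
  case False
  hence lt: "t' < t" using assms by simp
  have t1: "t < 1" and w: "(1 / (1 - t)) *\<^sub>R (y - t *\<^sub>R x) \<in> Z" using assms(3) by (auto simp: SS_def)
  define w where "w = (1 / (1 - t)) *\<^sub>R (y - t *\<^sub>R x)"
  have tpos: "0 < t" using lt assms by simp
  define \<mu> where "\<mu> = (t' / t) * (1 - t) / (1 - t')"
  have mu0: "0 \<le> \<mu>" using tpos t1 lt assms by (auto simp: \<mu>_def)
  have mu1: "\<mu> \<le> 1"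
  proof -
    have "t' * (1 - t) \<le> t * (1 - t')" using assms lt by (simp add: algebra_simps)
    hence "(t'/t) * (1-t) \<le> 1 - t'" using tpos by (simp add: field_simps)
    have "\<mu> = (t'*(1-t))/(t*(1-t'))" using tpos by (simp add: \<mu>_def)
    moreover have "0 < t*(1-t')" using tpos lt t1 by simp
    ultimately show ?thesis using \<open>t' * (1 - t) \<le> t * (1 - t')\<close> by (simp add: divide_le_eq_1)
  qed
  have ywt: "y - t *\<^sub>R x = (1 - t) *\<^sub>R w" using t1 by (simp add: w_def)
  have "y - t' *\<^sub>R x = (t'/t) *\<^sub>R (y - t *\<^sub>R x) + (1 - t'/t) *\<^sub>R y"
    using tpos by (simp add: algebra_simps)
  also have "\<dots> = ((t'/t) * (1 - t)) *\<^sub>R w + (1 - t'/t) *\<^sub>R y" by (simp add: ywt)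
  finally have eq: "y - t' *\<^sub>R x = ((t'/t) * (1 - t)) *\<^sub>R w + (1 - t'/t) *\<^sub>R y" .
  have "(1 / (1 - t')) *\<^sub>R (y - t' *\<^sub>R x) = \<mu> *\<^sub>R w + (1 - \<mu>) *\<^sub>R y"
  proof -
    have h: "1 - \<mu> = (1 / (1 - t')) * (1 - t'/t)"
      using tpos lt t1 by (simp add: \<mu>_def field_simps)
    show ?thesis unfolding eq h by (simp add: \<mu>_def scaleR_add_right)
  qed
  moreover have "\<mu> *\<^sub>R w + (1 - \<mu>) *\<^sub>R y \<in> Z"
    using convexD[OF assms(1) w assms(2) mu0, of "1-\<mu>"] mu1 unfolding w_def by simp
  ultimately show ?thesis using assms lt t1 by (simp add: SS_def)
qed

lemma SS_below:
  assumes "convex Z" "y \<in> Z" "0 \<le> a" "a < tweight Z y x"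
  shows "a \<in> SS Z y x"
proof -
  have "SS Z y x \<noteq> {}" using SS_0[OF assms(2)] by blast
  then obtain t where "t \<in> SS Z y x" "a < t"
    using assms(4) less_cSup_iff[OF _ SS_bdd, of Z y x a] by (auto simp: tw_SS)
  thus ?thesis using SS_down[OF assms(1,2)] assms(3) by simp
qed

lemma SS_upper: "t \<in> SS Z y x \<Longrightarrow> t \<le> tweight Z y x"
  by (simp add: tw_SS cSup_upper SS_bdd)



lemma tw_pos:
  assumes "convex Z" "y \<in> Z" "leqC Z x y"
  shows "0 < tweight Z y x"
proof -
  obtain z t where z: "z \<in> Z" "0 < t" "t \<le> 1" "y = t *\<^sub>R x + (1 - t) *\<^sub>R z"
    using assms(3) by (auto simp: leqC_def)
  show ?thesis
  proof (cases "t = 1")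
    case True
    hence "y = x" using z by simp
    have hx: "x - (1/2::real) *\<^sub>R x = (1 - 1/2::real) *\<^sub>R x" using scaleR_diff_left[of 1 "1/2::real" x] by simp
    have "(1 / (1 - 1/2)) *\<^sub>R (y - (1/2::real) *\<^sub>R x) = y" using \<open>y = x\<close> hx by simp
    hence "1/2 \<in> SS Z y x" using assms(2) by (simp add: SS_def)
    thus ?thesis using SS_upper by fastforce
  next
    case False
    hence t1: "t < 1" using z by simp
    have "y - t *\<^sub>R x = (1 - t) *\<^sub>R z" using z by simp
    hence "(1 / (1 - t)) *\<^sub>R (y - t *\<^sub>R x) = z" using t1 by simp
    hence "t \<in> SS Z y x" using z t1 by (simp add: SS_def)
    thus ?thesis using SS_upper z by fastforce
  qed
qed

lemma SS_comb:
  assumes "convex Z" "a \<in> SS Z y x1" "b \<in> SS Z y x2" "0 < a" "0 < b" "0 \<le> s" "s \<le> 1"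
  shows "1 / (s / a + (1 - s) / b) \<in> SS Z y (s *\<^sub>R x1 + (1 - s) *\<^sub>R x2)"
proof -
  have a1: "a < 1" and w1: "(1 / (1 - a)) *\<^sub>R (y - a *\<^sub>R x1) \<in> Z" using assms(2) by (auto simp: SS_def)
  have b1: "b < 1" and w2: "(1 / (1 - b)) *\<^sub>R (y - b *\<^sub>R x2) \<in> Z" using assms(3) by (auto simp: SS_def)
  define w1 where "w1 = (1 / (1 - a)) *\<^sub>R (y - a *\<^sub>R x1)"
  define w2 where "w2 = (1 / (1 - b)) *\<^sub>R (y - b *\<^sub>R x2)"
  define H where "H = s / a + (1 - s) / b"
  define c where "c = 1 / H"
  have H1: "H > 1"
  proof (cases "s = 0")
    case True thus ?thesis using b1 assms by (simp add: H_def)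
  next
    case False
    hence "s < s / a" using assms a1 by (simp add: less_divide_eq)
    moreover have "1 - s \<le> (1 - s) / b" using assms b1 by (simp add: le_divide_eq) (simp add: mult_left_le)
    ultimately show ?thesis by (simp add: H_def)
  qed
  have c0: "0 < c" and c1: "c < 1" using H1 by (auto simp: c_def)
  have x1e: "a *\<^sub>R x1 = y - (1 - a) *\<^sub>R w1" using a1 by (simp add: w1_def)
  have x2e: "b *\<^sub>R x2 = y - (1 - b) *\<^sub>R w2" using b1 by (simp add: w2_def)
  have x1f: "x1 = (1/a) *\<^sub>R (y - (1 - a) *\<^sub>R w1)"
  proof -
    have "(1/a) *\<^sub>R (a *\<^sub>R x1) = x1" using assms(4) by simp
    thus ?thesis using x1e by simp
  qed
  have x2f: "x2 = (1/b) *\<^sub>R (y - (1 - b) *\<^sub>R w2)"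
  proof -
    have "(1/b) *\<^sub>R (b *\<^sub>R x2) = x2" using assms(5) by simp
    thus ?thesis using x2e by simp
  qed
  define m1 where "m1 = c * s * (1 - a) / a"
  define m2 where "m2 = c * (1 - s) * (1 - b) / b"
  have cH: "c * H = 1" using H1 by (simp add: c_def)
  have k1: "c * s / a + c * (1 - s) / b = 1" using cH by (simp add: H_def algebra_simps add_divide_distrib)
  have e1: "c *\<^sub>R (s *\<^sub>R x1 + (1 - s) *\<^sub>R x2)
     = (c * s / a) *\<^sub>R (y - (1 - a) *\<^sub>R w1) + (c * (1 - s) / b) *\<^sub>R (y - (1 - b) *\<^sub>R w2)"
    unfolding x1f x2f by (simp add: scaleR_add_right)
  have e2: "(c * s / a) *\<^sub>R (y - (1 - a) *\<^sub>R w1) = (c * s / a) *\<^sub>R y - m1 *\<^sub>R w1"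
    by (simp add: scaleR_diff_right m1_def)
  have e3: "(c * (1 - s) / b) *\<^sub>R (y - (1 - b) *\<^sub>R w2) = (c * (1 - s) / b) *\<^sub>R y - m2 *\<^sub>R w2"
    by (simp add: scaleR_diff_right m2_def)
  have e4: "(c * s / a) *\<^sub>R y + (c * (1 - s) / b) *\<^sub>R y = y"
    using k1 scaleR_add_left[of "c * s / a" "c * (1 - s) / b" y] by simp
  have eq: "y - c *\<^sub>R (s *\<^sub>R x1 + (1 - s) *\<^sub>R x2) = m1 *\<^sub>R w1 + m2 *\<^sub>R w2"
    unfolding e1 e2 e3 using e4 by (simp add: algebra_simps)
  have msum: "m1 + m2 = 1 - c"
  proof -
    have "m1 + m2 = c * H - c * s - c * (1 - s)"
      unfolding m1_def m2_def H_def using assms(4,5) by (simp add: field_simps)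
    thus ?thesis using cH by (simp add: algebra_simps)
  qed
  have m10: "0 \<le> m1" using c0 assms a1 by (simp add: m1_def)
  have m20: "0 \<le> m2" using c0 assms b1 by (simp add: m2_def)
  define \<mu> where "\<mu> = m1 / (1 - c)"
  have mu0: "0 \<le> \<mu>" "\<mu> \<le> 1" using m10 m20 msum c1 by (auto simp: \<mu>_def field_simps)
  have mu2: "1 - \<mu> = m2 / (1 - c)" using msum c1 by (simp add: \<mu>_def field_simps)
  have "(1 / (1 - c)) *\<^sub>R (y - c *\<^sub>R (s *\<^sub>R x1 + (1 - s) *\<^sub>R x2)) = \<mu> *\<^sub>R w1 + (1 - \<mu>) *\<^sub>R w2"
    unfolding eq mu2 by (simp add: \<mu>_def scaleR_add_right)
  moreover have "\<mu> *\<^sub>R w1 + (1 - \<mu>) *\<^sub>R w2 \<in> Z"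
    using convexD[OF assms(1) w1 w2 mu0(1), of "1-\<mu>"] mu0(2) unfolding w1_def w2_def by simp
  ultimately show ?thesis using c0 c1 by (simp add: SS_def c_def H_def)
qed

theorem lemma1:
  fixes Z :: "'a::real_vector set" and y x1 x2 :: 'a and s :: real
  assumes "convex Z" and "y \<in> Z" and "x1 \<in> Z" and "x2 \<in> Z"
    and "leqC Z x1 y" and "leqC Z x2 y"
    and "0 \<le> s" and "s \<le> 1"
  shows "1 / tweight Z y (s *\<^sub>R x1 + (1 - s) *\<^sub>R x2)
           \<le> s / tweight Z y x1 + (1 - s) / tweight Z y x2"
proof -
  define t1 where "t1 = tweight Z y x1"
  define t2 where "t2 = tweight Z y x2"
  define T where "T = tweight Z y (s *\<^sub>R x1 + (1 - s) *\<^sub>R x2)"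
  define H where "H = s / t1 + (1 - s) / t2"
  have p1: "0 < t1" using tw_pos assms by (simp add: t1_def)
  have p2: "0 < t2" using tw_pos assms by (simp add: t2_def)
  have Hpos: "0 < H"
  proof (cases "s = 0")
    case True thus ?thesis using p2 by (simp add: H_def)
  next
    case False thus ?thesis using p1 p2 assms by (simp add: H_def add_pos_nonneg)
  qed
  have key: "l / H \<le> T" if l: "0 < l" "l < 1" for l
  proof -
    have "l * t1 \<in> SS Z y x1"
      using SS_below[OF assms(1,2)] p1 l by (simp add: t1_def)
    moreover have "l * t2 \<in> SS Z y x2"
      using SS_below[OF assms(1,2)] p2 l by (simp add: t2_def)
    ultimately have "1 / (s / (l*t1) + (1 - s) / (l*t2)) \<in> SS Z y (s *\<^sub>R x1 + (1 - s) *\<^sub>R x2)"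
      using SS_comb[OF assms(1) _ _ _ _ assms(7,8)] p1 p2 l by simp
    moreover have "s / (l*t1) + (1 - s) / (l*t2) = H / l"
      using l p1 p2 by (simp add: H_def field_simps)
    ultimately show ?thesis using SS_upper l by (fastforce simp: T_def)
  qed
  have "1 / H \<le> T"
  proof (rule field_le_mult_one_interval)
    fix l :: real assume "0 < l" "l < 1"
    thus "l * (1 / H) \<le> T" using key by simp
  qed
  hence "0 < T" using Hpos by (smt (verit) divide_pos_pos)
  hence "1 / T \<le> H" using \<open>1 / H \<le> T\<close> Hpos by (simp add: divide_le_eq le_divide_eq) (simp add: algebra_simps)
  thus ?thesis by (simp add: T_def H_def t1_def t2_def)
qed

end
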